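(* Let $A,N\in\mathbb{R}^{m\times n}$ and let $\hat A=A+N$. Then for every positive integer $k$, $$\|A-\hat A_k\|_2\le\|A-A_k\|_2+2\|N_k\|_2,$$ $$\|A-\hat A_k\|_F\le\|A-A_k\|_F+\|N_k\|_F+2\sqrt{\|N_k\|_F\,\|A_k\|_F}.$$
   Context: For a matrix $M$, $M_k$ denotes its best rank-$k$ approximation (the truncated SVD keeping the top $k$ singular triplets). $\|\cdot\|_2$ is the spectral norm and $\|\cdot\|_F$ the Frobenius norm. *)

theory Defs
  imports "HOL-Analysis.Analysis"
begin

text \<open>Real m x n matrices are modelled as real^'n^'m (m rows, n columns).\<close>

definition outer_prod :: "real^'m \<Rightarrow> real^'n \<Rightarrow> real^'n^'m" where
  "outer_prod u v = (\<chi> i j. u $ i * v $ j)"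

definition spec_norm :: "real^'n^'m \<Rightarrow> real" where
  "spec_norm M = onorm (\<lambda>x. M *v x)"

definition frob_norm :: "real^'n^'m \<Rightarrow> real" where
  "frob_norm M = sqrt (\<Sum>i\<in>UNIV. \<Sum>j\<in>UNIV. (M $ i $ j)^2)"

definition svd_expansion ::
  "real^'n^'m \<Rightarrow> nat \<Rightarrow> (nat \<Rightarrow> real) \<Rightarrow> (nat \<Rightarrow> real^'m) \<Rightarrow> (nat \<Rightarrow> real^'n) \<Rightarrow> bool" where
  "svd_expansion M r \<sigma> u v \<longleftrightarrow>
     (\<forall>i<r. 0 < \<sigma> i) \<and>
     (\<forall>i j. i \<le> j \<and> j < r \<longrightarrow> \<sigma> j \<le> \<sigma> i) \<and>
     (\<forall>i<r. \<forall>j<r. u i \<bullet> u j = (if i = j then 1 else 0)) \<and>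
     (\<forall>i<r. \<forall>j<r. v i \<bullet> v j = (if i = j then 1 else 0)) \<and>
     M = (\<Sum>i<r. \<sigma> i *\<^sub>R outer_prod (u i) (v i))"

definition best_rank_approx :: "nat \<Rightarrow> real^'n^'m \<Rightarrow> real^'n^'m \<Rightarrow> bool" where
  "best_rank_approx k M B \<longleftrightarrow>
     (\<exists>r \<sigma> u v. svd_expansion M r \<sigma> u v \<and>
        B = (\<Sum>i<min k r. \<sigma> i *\<^sub>R outer_prod (u i) (v i)))"

end

theory Submission imports Defs begin

lemma outer_inner: "outer_prod (a::real^'m) (b::real^'n) \<bullet> outer_prod c d = (a \<bullet> c) * (b \<bullet> d)"
  unfolding outer_prod_def inner_vec_def
  by (simp add: sum_product mult_ac)

lemma outer_inner_M: "outer_prod (a::real^'m) (b::real^'n) \<bullet> M = b \<bullet> (a v* M)"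
proof -
  have "outer_prod a b \<bullet> M = (\<Sum>i\<in>UNIV. \<Sum>j\<in>UNIV. a$i * b$j * M$i$j)"
    unfolding outer_prod_def inner_vec_def by simp
  also have "\<dots> = (\<Sum>j\<in>UNIV. \<Sum>i\<in>UNIV. b$j * (a$i * M$i$j))"
    by (subst sum.swap) (simp add: mult_ac)
  also have "\<dots> = b \<bullet> (a v* M)"
    unfolding inner_vec_def vector_matrix_mult_def by (simp add: sum_distrib_left)
  finally show ?thesis .
qed

lemma outer_diff: "outer_prod (u::real^'m) (a - b :: real^'n) = outer_prod u a - outer_prod u b"
  unfolding outer_prod_def by (simp add: vec_eq_iff right_diff_distrib)

lemma outer_scale: "outer_prod (u::real^'m) (c *\<^sub>R a :: real^'n) = c *\<^sub>R outer_prod u a"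
  unfolding outer_prod_def by (simp add: vec_eq_iff mult_ac)

lemma vm_diff: "(w::real^'m) v* (M - N :: real^'n^'m) = w v* M - w v* N"
  unfolding vector_matrix_mult_def
  by (simp add: vec_eq_iff sum_subtractf right_diff_distrib)


lemma mv_outer: "(c *\<^sub>R outer_prod (u::real^'m) (v::real^'n)) *v x = (c * (v \<bullet> x)) *\<^sub>R u"
  unfolding outer_prod_def matrix_vector_mult_def inner_vec_def
  by (simp add: vec_eq_iff sum_distrib_left mult_ac)

lemma vm_outer: "(w::real^'m) v* (c *\<^sub>R outer_prod (u::real^'m) (v::real^'n)) = (c * (w \<bullet> u)) *\<^sub>R v"
  unfolding outer_prod_def vector_matrix_mult_def inner_vec_def
  by (simp add: vec_eq_iff sum_distrib_left sum_distrib_right mult_ac)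

lemma mv_sum: "(\<Sum>i\<in>I. c i *\<^sub>R outer_prod (u i :: real^'m) (v i :: real^'n)) *v x
   = (\<Sum>i\<in>I. (c i * (v i \<bullet> x)) *\<^sub>R u i)"
proof (cases "finite I")
  case True then show ?thesis
    by (induction I rule: finite_induct) (simp_all add: matrix_vector_mult_add_rdistrib mv_outer)
qed simp

lemma vm_sum: "(w::real^'m) v* (\<Sum>i\<in>I. c i *\<^sub>R outer_prod (u i :: real^'m) (v i :: real^'n))
   = (\<Sum>i\<in>I. (c i * (w \<bullet> u i)) *\<^sub>R v i)"
proof (cases "finite I")
  case True then show ?thesis
    by (induction I rule: finite_induct) (simp_all add: vector_matrix_mult_add_rdistrib vm_outer)
qed simp


definition orthonorm :: "(nat \<Rightarrow> 'a::real_inner) \<Rightarrow> nat \<Rightarrow> bool" where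
  "orthonorm e r \<longleftrightarrow> (\<forall>i<r. \<forall>j<r. e i \<bullet> e j = (if i = j then 1 else 0))"

lemma on_inner_sum:
  assumes "orthonorm e r" "I \<subseteq> {..<r}"
  shows "(\<Sum>i\<in>I. c i *\<^sub>R e i) \<bullet> (\<Sum>j\<in>I. d j *\<^sub>R e j) = (\<Sum>i\<in>I. c i * d i)"
proof -
  have fin: "finite I" using assms(2) finite_subset by blast
  have "(\<Sum>i\<in>I. c i *\<^sub>R e i) \<bullet> (\<Sum>j\<in>I. d j *\<^sub>R e j) = (\<Sum>i\<in>I. \<Sum>j\<in>I. c i * d j * (e i \<bullet> e j))"
    apply (simp add: inner_sum_left inner_sum_right sum_distrib_left)
    apply (subst sum.swap)
    apply (simp add: mult_ac)
    done
  also have "\<dots> = (\<Sum>i\<in>I. \<Sum>j\<in>I. if i = j then c i * d j else 0)"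
    using assms unfolding orthonorm_def by (intro sum.cong refl) (auto simp: subset_iff)
  also have "\<dots> = (\<Sum>i\<in>I. c i * d i)"
    using fin by simp
  finally show ?thesis .
qed

lemma on_norm_sum:
  assumes "orthonorm e r" "I \<subseteq> {..<r}"
  shows "(norm (\<Sum>i\<in>I. c i *\<^sub>R e i))\<^sup>2 = (\<Sum>i\<in>I. (c i)\<^sup>2)"
  using on_inner_sum[OF assms, of c c] by (simp add: power2_norm_eq_inner[symmetric] power2_eq_square)

lemma on_inner_one:
  assumes "orthonorm e r" "I \<subseteq> {..<r}" "j \<in> I"
  shows "e j \<bullet> (\<Sum>i\<in>I. c i *\<^sub>R e i) = c j"
proof -
  have fin: "finite I" using assms(2) finite_subset by blast
  have "e j \<bullet> (\<Sum>i\<in>I. c i *\<^sub>R e i) = (\<Sum>i\<in>I. if j = i then c i else 0)"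
    unfolding inner_sum_right using assms unfolding orthonorm_def
    by (intro sum.cong refl) (auto simp: subset_iff)
  then show ?thesis using fin assms(3) by simp
qed

lemma bessel:
  assumes "orthonorm e r" "I \<subseteq> {..<r}"
  shows "(\<Sum>i\<in>I. (e i \<bullet> x)\<^sup>2) \<le> (norm x)\<^sup>2"
proof -
  define s where "s = (\<Sum>i\<in>I. (e i \<bullet> x) *\<^sub>R e i)"
  have ss: "s \<bullet> s = (\<Sum>i\<in>I. (e i \<bullet> x)\<^sup>2)"
    unfolding s_def using on_inner_sum[OF assms] by (simp add: power2_eq_square)
  have sx: "s \<bullet> x = (\<Sum>i\<in>I. (e i \<bullet> x)\<^sup>2)"
    unfolding s_def by (simp add: inner_sum_left power2_eq_square)
  have "0 \<le> (x - s) \<bullet> (x - s)" by simp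
  also have "\<dots> = x \<bullet> x - 2 * (s \<bullet> x) + s \<bullet> s"
    by (simp add: inner_diff_left inner_diff_right inner_commute)
  finally show ?thesis using ss sx by (simp add: power2_norm_eq_inner)
qed

lemma span_expand:
  assumes "orthonorm e r" "I \<subseteq> {..<r}" "x \<in> span (e ` I)"
  shows "(norm x)\<^sup>2 = (\<Sum>i\<in>I. (e i \<bullet> x)\<^sup>2)"
proof -
  define s where "s = (\<Sum>i\<in>I. (e i \<bullet> x) *\<^sub>R e i)"
  have fin: "finite I" using assms(2) finite_subset by blast
  have "s \<in> span (e ` I)" unfolding s_def
    by (intro span_sum span_scale span_base) auto
  then have zs: "x - s \<in> span (e ` I)" using assms(3) span_diff by blast
  have orth: "orthogonal (x - s) y" if yI: "y \<in> e ` I" for y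
  proof -
    obtain j where j: "j \<in> I" "y = e j" using yI by blast
    have "e j \<bullet> s = e j \<bullet> x" unfolding s_def using on_inner_one[OF assms(1,2) j(1)] .
    then show ?thesis using j by (simp add: orthogonal_def inner_diff_left inner_diff_right inner_commute)
  qed
  have "orthogonal (x - s) (x - s)" by (rule orthogonal_to_span[OF zs orth])
  then have "x = s" by (simp add: orthogonal_def)
  then show ?thesis using on_norm_sum[OF assms(1,2), of "\<lambda>i. e i \<bullet> x"] s_def by simp
qed


lemma rearr:
  fixes a c :: "nat \<Rightarrow> real"
  assumes dec: "\<forall>i j. i \<le> j \<and> j < r \<longrightarrow> a j \<le> a i"
    and nn: "\<forall>i<r. 0 \<le> a i" and c01: "\<forall>i<r. 0 \<le> c i \<and> c i \<le> 1"
    and cs: "(\<Sum>i<r. c i) \<le> real k"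
  shows "(\<Sum>i<r. a i * c i) \<le> (\<Sum>i<min k r. a i)"
proof -
  define t where "t = (if k < r then a (k - 1) else 0)"
  have t0: "0 \<le> t" unfolding t_def using nn by auto
  have pw: "a i * c i \<le> (if i < k then a i else 0) + t * (c i - (if i < k then 1 else 0))"
    if i: "i < r" for i
  proof (cases "k < r")
    case True
    show ?thesis
    proof (cases "i < k")
      case True
      have "i \<le> k - 1" "k - 1 < r" using True \<open>k < r\<close> by auto
      then have "t \<le> a i" unfolding t_def using \<open>k < r\<close> dec by auto
      then have "0 \<le> (a i - t) * (1 - c i)" using c01 i by auto
      then show ?thesis using True by (simp add: algebra_simps)
    next
      case False
      have "a i \<le> t" unfolding t_def using \<open>k < r\<close> False dec i by auto
      then have "a i * c i \<le> t * c i" using c01 i by (simp add: mult_right_mono)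
      then show ?thesis using False by simp
    qed
  next
    case False
    then have "i < k" using i by simp
    then show ?thesis unfolding t_def using False c01 nn i
      by (simp add: mult_left_le)
  qed
  have "(\<Sum>i<r. a i * c i) \<le> (\<Sum>i<r. (if i < k then a i else 0) + t * (c i - (if i < k then 1 else 0)))"
    by (rule sum_mono) (use pw in auto)
  also have "\<dots> = (\<Sum>i<r. (if i < k then a i else 0)) + t * ((\<Sum>i<r. c i) - (\<Sum>i<r. (if i < k then 1 else 0)))"
    by (simp add: sum.distrib sum_distrib_left sum_subtractf algebra_simps)
  also have "(\<Sum>i<r. (if i < k then a i else 0)) = (\<Sum>i<min k r. a i)"
  proof -
    have "(\<Sum>i<r. (if i < k then a i else 0)) = (\<Sum>i\<in>{..<r} \<inter> {i. i < k}. a i)"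
      by (simp add: sum.inter_restrict)
    also have "{..<r} \<inter> {i. i < k} = {..<min k r}" by auto
    finally show ?thesis .
  qed
  also have "(\<Sum>i<r. (if i < k then 1 else 0::real)) = real (min k r)"
  proof -
    have "(\<Sum>i<r. (if i < k then 1 else 0::real)) = (\<Sum>i\<in>{..<r} \<inter> {i. i < k}. 1)"
      by (simp only: sum.inter_restrict[OF finite_lessThan]) (simp add: if_distrib)
    also have "{..<r} \<inter> {i. i < k} = {..<min k r}" by auto
    finally show ?thesis by simp
  qed
  also have "t * ((\<Sum>i<r. c i) - real (min k r)) \<le> 0"
  proof (cases "k < r")
    case True
    then show ?thesis using t0 cs by (simp add: mult_nonneg_nonpos)
  next
    case False then show ?thesis unfolding t_def by simp
  qed
  finally show ?thesis by simp
qed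


lemma frob_eq_norm: "frob_norm (M::real^'n^'m) = norm M"
  unfolding frob_norm_def norm_eq_sqrt_inner inner_vec_def
  by (simp add: power2_eq_square)

lemma svd_on:
  assumes "svd_expansion M r \<sigma> u v"
  shows "orthonorm u r" "orthonorm v r" "orthonorm (\<lambda>i. outer_prod (u i) (v i)) r"
    "\<forall>i<r. 0 < \<sigma> i" "\<forall>i j. i \<le> j \<and> j < r \<longrightarrow> \<sigma> j \<le> \<sigma> i"
    "M = (\<Sum>i<r. \<sigma> i *\<^sub>R outer_prod (u i) (v i))"
  using assms unfolding svd_expansion_def orthonorm_def by (auto simp: outer_inner)

definition proj :: "(nat \<Rightarrow> real^'m) \<Rightarrow> nat \<Rightarrow> real^'n^'m \<Rightarrow> real^'n^'m" where
  "proj w p M = (\<Sum>l<p. outer_prod (w l) (w l v* M))"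

lemma proj_diff: "proj w p (M - N) = proj w p M - proj w p N"
  unfolding proj_def by (simp add: vm_diff outer_diff sum_subtractf)

lemma proj_inner:
  assumes "orthonorm w p"
  shows "proj w p M \<bullet> proj w p M = (\<Sum>l<p. (w l v* M) \<bullet> (w l v* M))"
    "proj w p M \<bullet> M = (\<Sum>l<p. (w l v* M) \<bullet> (w l v* M))"
proof -
  have "proj w p M \<bullet> proj w p M = (\<Sum>l<p. \<Sum>m<p. (w l \<bullet> w m) * ((w l v* M) \<bullet> (w m v* M)))"
    unfolding proj_def by (simp add: inner_sum_left inner_sum_right outer_inner) (rule sum.swap)
  also have "\<dots> = (\<Sum>l<p. \<Sum>m<p. if l = m then (w l v* M) \<bullet> (w m v* M) else 0)"
    using assms unfolding orthonorm_def by (intro sum.cong refl) auto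
  also have "\<dots> = (\<Sum>l<p. (w l v* M) \<bullet> (w l v* M))" by simp
  finally show "proj w p M \<bullet> proj w p M = (\<Sum>l<p. (w l v* M) \<bullet> (w l v* M))" .
  show "proj w p M \<bullet> M = (\<Sum>l<p. (w l v* M) \<bullet> (w l v* M))"
    unfolding proj_def by (simp add: inner_sum_left outer_inner_M)
qed

lemma proj_norm:
  assumes "orthonorm w p"
  shows "(norm (proj w p M))\<^sup>2 = (\<Sum>l<p. (norm (w l v* M))\<^sup>2)"
  using proj_inner(1)[OF assms] by (simp add: power2_norm_eq_inner)

lemma proj_pyth:
  assumes "orthonorm w p"
  shows "(norm M)\<^sup>2 = (norm (proj w p M))\<^sup>2 + (norm (M - proj w p M))\<^sup>2"
proof -
  have "(norm (M - proj w p M))\<^sup>2 = M \<bullet> M - 2 * (proj w p M \<bullet> M) + proj w p M \<bullet> proj w p M"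
    by (simp add: power2_norm_eq_inner inner_diff_left inner_diff_right inner_commute)
  then show ?thesis using proj_inner[OF assms, of M] by (simp add: power2_norm_eq_inner)
qed

lemma proj_svd:
  assumes "svd_expansion M r \<sigma> u v" "p \<le> r"
  shows "proj u p M = (\<Sum>i<p. \<sigma> i *\<^sub>R outer_prod (u i) (v i))"
proof -
  have on: "orthonorm u r" using svd_on[OF assms(1)] by auto
  have "u l v* M = \<sigma> l *\<^sub>R v l" if l: "l < p" for l
  proof -
    have "u l v* M = (\<Sum>i<r. (\<sigma> i * (u l \<bullet> u i)) *\<^sub>R v i)"
      using svd_on(6)[OF assms(1)] by (simp add: vm_sum)
    also have "\<dots> = (\<Sum>i<r. if l = i then \<sigma> i *\<^sub>R v i else 0)"
      using on l assms(2) unfolding orthonorm_def by (intro sum.cong refl) auto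
    also have "\<dots> = \<sigma> l *\<^sub>R v l" using l assms(2) by simp
    finally show ?thesis .
  qed
  then show ?thesis unfolding proj_def by (simp add: outer_scale)
qed

lemma svd_norm:
  assumes "svd_expansion M r \<sigma> u v" "q \<le> r"
  shows "(norm (\<Sum>i<q. \<sigma> i *\<^sub>R outer_prod (u i) (v i)))\<^sup>2 = (\<Sum>i<q. (\<sigma> i)\<^sup>2)"
  using on_norm_sum[OF svd_on(3)[OF assms(1)], of "{..<q}" \<sigma>] assms(2) by auto

lemma kyfan:
  assumes svd: "svd_expansion M r \<sigma> u v" and w: "orthonorm w p" and pk: "p \<le> k"
  shows "(norm (proj w p M))\<^sup>2 \<le> (\<Sum>i<min k r. (\<sigma> i)\<^sup>2)"
proof -
  note S = svd_on[OF svd]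
  define c where "c i = (\<Sum>l<p. (w l \<bullet> u i)\<^sup>2)" for i
  have row: "(norm (w l v* M))\<^sup>2 = (\<Sum>i<r. (\<sigma> i)\<^sup>2 * (w l \<bullet> u i)\<^sup>2)" for l
  proof -
    have "w l v* M = (\<Sum>i<r. (\<sigma> i * (w l \<bullet> u i)) *\<^sub>R v i)"
      using S(6) by (simp add: vm_sum)
    then show ?thesis using on_norm_sum[OF S(2), of "{..<r}"] by (simp add: power_mult_distrib)
  qed
  have "(norm (proj w p M))\<^sup>2 = (\<Sum>l<p. \<Sum>i<r. (\<sigma> i)\<^sup>2 * (w l \<bullet> u i)\<^sup>2)"
    unfolding proj_norm[OF w] by (rule sum.cong[OF refl row])
  also have "\<dots> = (\<Sum>i<r. (\<sigma> i)\<^sup>2 * c i)"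
    unfolding c_def sum_distrib_left by (rule sum.swap)
  also have "\<dots> \<le> (\<Sum>i<min k r. (\<sigma> i)\<^sup>2)"
  proof (rule rearr)
    show "\<forall>i j. i \<le> j \<and> j < r \<longrightarrow> (\<sigma> j)\<^sup>2 \<le> (\<sigma> i)\<^sup>2"
    proof (intro allI impI)
      fix i j assume ij: "i \<le> j \<and> j < r"
      have "\<sigma> j \<le> \<sigma> i" using S(5) ij by blast
      moreover have "0 < \<sigma> j" using S(4) ij by blast
      ultimately have "0 \<le> \<sigma> j" "\<sigma> j \<le> \<sigma> i" by auto
      then show "(\<sigma> j)\<^sup>2 \<le> (\<sigma> i)\<^sup>2" by (simp add: power_mono)
    qed
    show "\<forall>i<r. 0 \<le> (\<sigma> i)\<^sup>2" by simp
    show "\<forall>i<r. 0 \<le> c i \<and> c i \<le> 1"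
    proof (intro allI impI conjI)
      fix i assume i: "i < r"
      show "0 \<le> c i" unfolding c_def by (simp add: sum_nonneg)
      have "c i = (\<Sum>l<p. (w l \<bullet> u i)\<^sup>2)" by (simp add: c_def)
      also have "\<dots> \<le> (norm (u i))\<^sup>2" by (rule bessel[OF w]) simp
      also have "(norm (u i))\<^sup>2 = 1" using S(1) i unfolding orthonorm_def
        by (simp add: power2_norm_eq_inner)
      finally show "c i \<le> 1" .
    qed
    have "(\<Sum>i<r. c i) = (\<Sum>l<p. \<Sum>i<r. (u i \<bullet> w l)\<^sup>2)"
      unfolding c_def by (subst sum.swap) (simp add: inner_commute)
    also have "\<dots> \<le> (\<Sum>l<p. 1)"
    proof (rule sum_mono)
      fix l assume l: "l \<in> {..<p}"
      have "(\<Sum>i<r. (u i \<bullet> w l)\<^sup>2) \<le> (norm (w l))\<^sup>2" by (rule bessel[OF S(1)]) simp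
      also have "\<dots> = 1" using w l unfolding orthonorm_def by (simp add: power2_norm_eq_inner)
      finally show "(\<Sum>i<r. (u i \<bullet> w l)\<^sup>2) \<le> 1" .
    qed
    also have "\<dots> \<le> real k" using pk by simp
    finally show "(\<Sum>i<r. c i) \<le> real k" .
  qed
  finally show ?thesis .
qed

lemma spec_ge: "norm ((M::real^'n^'m) *v x) \<le> spec_norm M * norm x"
  unfolding spec_norm_def by (rule onorm) simp

lemma spec_nonneg: "0 \<le> spec_norm (M::real^'n^'m)"
  unfolding spec_norm_def by (rule onorm_pos_le) simp

lemma spec_le:
  assumes "\<And>x. norm ((M::real^'n^'m) *v x) \<le> b * norm x"
  shows "spec_norm M \<le> b"
  unfolding spec_norm_def by (rule onorm_le) (rule assms)

lemma spec_add: "spec_norm ((M::real^'n^'m) + N) \<le> spec_norm M + spec_norm N"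
proof (rule spec_le)
  fix x
  have "norm ((M + N) *v x) \<le> norm (M *v x) + norm (N *v x)"
    by (simp add: matrix_vector_mult_add_rdistrib norm_triangle_ineq)
  also have "\<dots> \<le> spec_norm M * norm x + spec_norm N * norm x"
    by (intro add_mono spec_ge)
  finally show "norm ((M + N) *v x) \<le> (spec_norm M + spec_norm N) * norm x"
    by (simp add: algebra_simps)
qed

lemma spec_diff: "spec_norm ((M::real^'n^'m) - N) \<le> spec_norm M + spec_norm N"
proof (rule spec_le)
  fix x
  have "norm ((M - N) *v x) \<le> norm (M *v x) + norm (N *v x)"
    by (simp add: matrix_vector_mult_diff_rdistrib norm_triangle_ineq4)
  also have "\<dots> \<le> spec_norm M * norm x + spec_norm N * norm x"
    by (intro add_mono spec_ge)
  finally show "norm ((M - N) *v x) \<le> (spec_norm M + spec_norm N) * norm x"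
    by (simp add: algebra_simps)
qed

lemma spec_bound:
  assumes u: "orthonorm u r" and v: "orthonorm v r" and I: "I \<subseteq> {..<r}"
    and s0: "0 \<le> s" and bd: "\<forall>i\<in>I. \<bar>\<sigma> i\<bar> \<le> s"
  shows "spec_norm (\<Sum>i\<in>I. \<sigma> i *\<^sub>R outer_prod (u i :: real^'m) (v i :: real^'n)) \<le> s"
proof (rule spec_le)
  fix x
  have "(norm ((\<Sum>i\<in>I. \<sigma> i *\<^sub>R outer_prod (u i) (v i)) *v x))\<^sup>2 = (\<Sum>i\<in>I. (\<sigma> i * (v i \<bullet> x))\<^sup>2)"
    unfolding mv_sum by (rule on_norm_sum[OF u I])
  also have "\<dots> \<le> (\<Sum>i\<in>I. s\<^sup>2 * (v i \<bullet> x)\<^sup>2)"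
  proof (rule sum_mono)
    fix i assume "i \<in> I"
    then have "\<bar>\<sigma> i\<bar> \<le> s" using bd by auto
    then have "\<bar>\<sigma> i\<bar>\<^sup>2 \<le> s\<^sup>2" by (intro power_mono) auto
    then have "(\<sigma> i)\<^sup>2 \<le> s\<^sup>2" by simp
    then have "(\<sigma> i)\<^sup>2 * (v i \<bullet> x)\<^sup>2 \<le> s\<^sup>2 * (v i \<bullet> x)\<^sup>2"
      by (rule mult_right_mono) simp
    then show "(\<sigma> i * (v i \<bullet> x))\<^sup>2 \<le> s\<^sup>2 * (v i \<bullet> x)\<^sup>2"
      by (simp only: power_mult_distrib)
  qed
  also have "\<dots> = s\<^sup>2 * (\<Sum>i\<in>I. (v i \<bullet> x)\<^sup>2)" by (simp add: sum_distrib_left)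
  also have "\<dots> \<le> s\<^sup>2 * (norm x)\<^sup>2" by (rule mult_left_mono[OF bessel[OF v I]]) simp
  also have "\<dots> = (s * norm x)\<^sup>2" by (simp only: power_mult_distrib)
  finally have *: "(norm ((\<Sum>i\<in>I. \<sigma> i *\<^sub>R outer_prod (u i) (v i)) *v x))\<^sup>2 \<le> (s * norm x)\<^sup>2" .
  have "0 \<le> s * norm x" using s0 by simp
  with * show "norm ((\<Sum>i\<in>I. \<sigma> i *\<^sub>R outer_prod (u i) (v i)) *v x) \<le> s * norm x"
    by (rule power2_le_imp_le)
qed

lemma real_final:
  fixes a b n x y :: real
  assumes "0 \<le> a" "0 \<le> b" "0 \<le> n" "0 \<le> x" "0 \<le> y"
    and eq: "x\<^sup>2 + y\<^sup>2 = b\<^sup>2 + a\<^sup>2" and xb: "b - 2 * n \<le> x"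
  shows "y \<le> a + 2 * sqrt (n * b)"
proof -
  define s where "s = sqrt (n * b)"
  have s0: "0 \<le> s" and ss: "s\<^sup>2 = n * b" unfolding s_def using assms by auto
  have "y\<^sup>2 \<le> a\<^sup>2 + 4 * (n * b)"
  proof (cases "b \<le> 2 * n")
    case True
    then have "b * b \<le> (4 * n) * b" using assms by (intro mult_right_mono) auto
    moreover have "0 \<le> x * x" by simp
    moreover have "x * x + y * y = b * b + a * a" using eq by (simp add: power2_eq_square)
    ultimately show ?thesis unfolding power2_eq_square by linarith
  next
    case False
    then have "(b - 2 * n)\<^sup>2 \<le> x\<^sup>2" using xb by (intro power_mono) auto
    moreover have "(b - 2 * n)\<^sup>2 = b * b - 4 * (n * b) + 4 * (n * n)"
      by (simp add: power2_eq_square algebra_simps)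
    moreover have "0 \<le> n * n" by simp
    moreover have "x * x + y * y = b * b + a * a" using eq by (simp add: power2_eq_square)
    ultimately show ?thesis unfolding power2_eq_square by linarith
  qed
  also have "\<dots> \<le> (a + 2 * s)\<^sup>2"
  proof -
    have "0 \<le> a * s" using s0 assms by simp
    moreover have "(a + 2 * s)\<^sup>2 = a\<^sup>2 + 4 * (a * s) + 4 * s\<^sup>2"
      by (simp add: power2_eq_square algebra_simps)
    ultimately show ?thesis using ss by linarith
  qed
  finally have yy: "y\<^sup>2 \<le> (a + 2 * s)\<^sup>2" .
  have "0 \<le> a + 2 * s" using s0 assms(1) by linarith
  with yy have "y \<le> a + 2 * s" by (rule power2_le_imp_le)
  then show ?thesis by (simp add: s_def)
qed


lemma dimlem:
  fixes V W :: "nat \<Rightarrow> 'a::euclidean_space"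
  assumes V: "orthonorm V r" "k < r" and W: "orthonorm W q" "q \<le> k"
  shows "\<exists>x. norm x = 1 \<and> x \<in> span (V ` {..k}) \<and> (\<forall>j<q. W j \<bullet> x = 0)"
proof (rule ccontr)
  assume H: "\<not> ?thesis"
  define L where "L y = (\<Sum>j<q. (W j \<bullet> y) *\<^sub>R W j)" for y
  have lin: "linear L"
    by (rule linearI) (simp_all add: L_def inner_add_right scaleR_add_left sum.distrib scaleR_sum_right)
  have ker: "W j \<bullet> y = 0" if "L y = 0" "j < q" for y j
  proof -
    have "W j \<bullet> L y = W j \<bullet> y" unfolding L_def
      by (rule on_inner_one[OF W(1)]) (use that in auto)
    then show ?thesis using that by simp
  qed
  have inj: "inj_on L (span (V ` {..k}))"
  proof (rule inj_onI)
    fix y1 y2 assume y1: "y1 \<in> span (V ` {..k})" and y2: "y2 \<in> span (V ` {..k})" and eq: "L y1 = L y2"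
    define y where "y = y1 - y2"
    have ys: "y \<in> span (V ` {..k})" unfolding y_def using y1 y2 by (rule span_diff)
    have Ly: "L y = 0" unfolding y_def using eq linear_diff[OF lin] by simp
    show "y1 = y2"
    proof (rule ccontr)
      assume "y1 \<noteq> y2"
      then have yn: "y \<noteq> 0" unfolding y_def by simp
      define x where "x = (1 / norm y) *\<^sub>R y"
      have "norm x = 1" unfolding x_def using yn by simp
      moreover have "x \<in> span (V ` {..k})" unfolding x_def using ys by (rule span_scale)
      moreover have "\<forall>j<q. W j \<bullet> x = 0" unfolding x_def using ker[OF Ly] by simp
      ultimately show False using H by blast
    qed
  qed
  have injV: "inj_on V {..k}"
  proof (rule inj_onI)
    fix i j assume i: "i \<in> {..k}" and j: "j \<in> {..k}" and e: "V i = V j"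
    have "V i \<bullet> V i = 1" using V i unfolding orthonorm_def by auto
    then have "V i \<bullet> V j = 1" using e by simp
    then show "i = j" using V i j unfolding orthonorm_def by (auto split: if_splits)
  qed
  have indep: "independent (V ` {..k})"
  proof (rule pairwise_orthogonal_independent)
    show "pairwise orthogonal (V ` {..k})"
      unfolding pairwise_def orthogonal_def using V unfolding orthonorm_def by auto
    show "0 \<notin> V ` {..k}"
    proof
      assume "0 \<in> V ` {..k}"
      then obtain i where "i \<le> k" "V i = 0" by auto
      moreover have "V i \<bullet> V i = 1" using V \<open>i \<le> k\<close> unfolding orthonorm_def by auto
      ultimately show False by simp
    qed
  qed
  have "dim (L ` (V ` {..k})) = dim (V ` {..k})"
    using dim_image_eq[OF lin, of "V ` {..k}"] inj by simp
  also have "\<dots> = card (V ` {..k})"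
    using dim_span_eq_card_independent[OF indep] dim_span by simp
  also have "\<dots> = Suc k" using card_image[OF injV] by simp
  finally have d1: "dim (L ` (V ` {..k})) = Suc k" .
  have "L ` (V ` {..k}) \<subseteq> span (W ` {..<q})"
  proof
    fix z assume "z \<in> L ` (V ` {..k})"
    then obtain y where "z = L y" by blast
    moreover have "L y \<in> span (W ` {..<q})" unfolding L_def
      by (intro span_sum span_scale) (auto intro: span_base)
    ultimately show "z \<in> span (W ` {..<q})" by simp
  qed
  then have "dim (L ` (V ` {..k})) \<le> card (W ` {..<q})" by (rule dim_le_card) simp
  also have "\<dots> \<le> q" using card_image_le[of "{..<q}" W] by simp
  finally show False using d1 W(2) by simp
qed


lemma on_mono: "orthonorm e r \<Longrightarrow> p \<le> r \<Longrightarrow> orthonorm e p"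
  unfolding orthonorm_def by auto

lemma sq_le_norm:
  fixes a b :: real
  assumes "a\<^sup>2 \<le> b\<^sup>2" "0 \<le> b" shows "a \<le> b"
  using assms by (rule power2_le_imp_le)

theorem mainTheorem18:
  fixes A N Ak Nk Ahatk :: "real^'n^'m" and k :: nat
  assumes "0 < k"
    and "best_rank_approx k A Ak"
    and "best_rank_approx k N Nk"
    and "best_rank_approx k (A + N) Ahatk"
  shows "spec_norm (A - Ahatk) \<le> spec_norm (A - Ak) + 2 * spec_norm Nk
         \<and> frob_norm (A - Ahatk) \<le> frob_norm (A - Ak) + frob_norm Nk
           + 2 * sqrt (frob_norm Nk * frob_norm Ak)"
proof -
  from assms(2) obtain rA \<sigma>A uA vA where sA: "svd_expansion A rA \<sigma>A uA vA"
    and Ak: "Ak = (\<Sum>i<min k rA. \<sigma>A i *\<^sub>R outer_prod (uA i) (vA i))"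
    unfolding best_rank_approx_def by blast
  from assms(3) obtain rN \<sigma>N uN vN where sN: "svd_expansion N rN \<sigma>N uN vN"
    and Nk: "Nk = (\<Sum>i<min k rN. \<sigma>N i *\<^sub>R outer_prod (uN i) (vN i))"
    unfolding best_rank_approx_def by blast
  from assms(4) obtain rH \<sigma>H uH vH where sH: "svd_expansion (A + N) rH \<sigma>H uH vH"
    and Hk: "Ahatk = (\<Sum>i<min k rH. \<sigma>H i *\<^sub>R outer_prod (uH i) (vH i))"
    unfolding best_rank_approx_def by blast
  define kA where "kA = min k rA"
  define kN where "kN = min k rN"
  define kH where "kH = min k rH"
  note SA = svd_on[OF sA] and SN = svd_on[OF sN] and SH = svd_on[OF sH]
  define P :: "real^'n^'m \<Rightarrow> real^'n^'m" where "P = proj uH kH"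
  define Q :: "real^'n^'m \<Rightarrow> real^'n^'m" where "Q = proj uA kA"
  have onP: "orthonorm uH kH" using on_mono[OF SH(1)] kH_def by simp
  have onQ: "orthonorm uA kA" using on_mono[OF SA(1)] kA_def by simp
  have AkQ: "Ak = Q A" unfolding Q_def Ak kA_def by (rule proj_svd[OF sA, symmetric]) simp
  have HkP: "Ahatk = P (A + N)" unfolding P_def Hk kH_def by (rule proj_svd[OF sH, symmetric]) simp
  have Pdec: "P (A + N) = P A + P N"
    using proj_diff[of uH kH "A + N" N] unfolding P_def by simp
  have Qdec: "Q (A + N) = Q A + Q N"
    using proj_diff[of uA kA "A + N" N] unfolding Q_def by simp
  define n where "n = norm Nk"
  define a where "a = norm (A - Ak)"
  define b where "b = norm Ak"
  define x where "x = norm (P A)"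
  define y where "y = norm (A - P A)"
  have n2: "n\<^sup>2 = (\<Sum>i<min k rN. (\<sigma>N i)\<^sup>2)" unfolding n_def Nk by (rule svd_norm[OF sN]) simp
  have PN: "norm (P N) \<le> n"
  proof (rule sq_le_norm)
    show "(norm (P N))\<^sup>2 \<le> n\<^sup>2" unfolding n2 P_def by (rule kyfan[OF sN onP]) (simp add: kH_def)
  qed (simp add: n_def)
  have QN: "norm (Q N) \<le> n"
  proof (rule sq_le_norm)
    show "(norm (Q N))\<^sup>2 \<le> n\<^sup>2" unfolding n2 Q_def by (rule kyfan[OF sN onQ]) (simp add: kA_def)
  qed (simp add: n_def)
  have QH: "norm (Q (A + N)) \<le> norm (P (A + N))"
  proof (rule sq_le_norm)
    have "(norm (Q (A + N)))\<^sup>2 \<le> (\<Sum>i<min k rH. (\<sigma>H i)\<^sup>2)"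
      unfolding Q_def by (rule kyfan[OF sH onQ]) (simp add: kA_def)
    also have "\<dots> = (norm Ahatk)\<^sup>2" unfolding Hk by (rule svd_norm[OF sH, symmetric]) simp
    finally show "(norm (Q (A + N)))\<^sup>2 \<le> (norm (P (A + N)))\<^sup>2" using HkP by simp
  qed simp
  have "norm (P (A + N)) \<le> norm (P A) + norm (P N)" unfolding Pdec by (rule norm_triangle_ineq)
  moreover have "norm (Q A) \<le> norm (Q (A + N)) + norm (Q N)"
  proof -
    have "Q A = Q (A + N) - Q N" using Qdec by simp
    then show ?thesis using norm_triangle_ineq4[of "Q (A + N)" "Q N"] by simp
  qed
  ultimately have xb: "b - 2 * n \<le> x" unfolding b_def x_def AkQ using PN QN QH by linarith
  have eq1: "(norm A)\<^sup>2 = x\<^sup>2 + y\<^sup>2" unfolding x_def y_def P_def by (rule proj_pyth[OF onP])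
  have eq2: "(norm A)\<^sup>2 = b\<^sup>2 + a\<^sup>2" unfolding a_def b_def AkQ Q_def by (rule proj_pyth[OF onQ])
  have yb: "y \<le> a + 2 * sqrt (n * b)"
    by (rule real_final) (use eq1 eq2 xb in \<open>auto simp: a_def b_def n_def x_def y_def\<close>)
  have "A - Ahatk = (A - P A) - P N" unfolding HkP Pdec by simp
  then have "norm (A - Ahatk) \<le> y + norm (P N)"
    unfolding y_def using norm_triangle_ineq4 by metis
  then have frob: "frob_norm (A - Ahatk) \<le> frob_norm (A - Ak) + frob_norm Nk
           + 2 * sqrt (frob_norm Nk * frob_norm Ak)"
    unfolding frob_eq_norm using PN yb unfolding a_def b_def n_def by linarith
  have specN: "spec_norm N \<le> spec_norm Nk"
  proof (cases "rN = 0")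
    case True
    then have "N = 0" using SN(6) by simp
    then have "spec_norm N \<le> 0" by (intro spec_le) simp
    then show ?thesis using spec_nonneg[of Nk] by linarith
  next
    case False
    have "spec_norm N \<le> \<sigma>N 0" unfolding SN(6)
    proof (rule spec_bound[OF SN(1) SN(2)])
      show "0 \<le> \<sigma>N 0" using SN(4) False by (simp add: less_imp_le)
      show "\<forall>i\<in>{..<rN}. \<bar>\<sigma>N i\<bar> \<le> \<sigma>N 0"
      proof
        fix i assume i: "i \<in> {..<rN}"
        then have "0 < \<sigma>N i" "\<sigma>N i \<le> \<sigma>N 0" using SN(4) SN(5) by auto
        then show "\<bar>\<sigma>N i\<bar> \<le> \<sigma>N 0" by simp
      qed
    qed simp
    moreover have "\<sigma>N 0 \<le> spec_norm Nk"
    proof -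
      have k0: "0 < kN" unfolding kN_def using assms(1) False by simp
      have "(norm (Nk *v vN 0))\<^sup>2 = (\<Sum>i<kN. (\<sigma>N i * (vN i \<bullet> vN 0))\<^sup>2)"
        unfolding Nk mv_sum kN_def by (rule on_norm_sum[OF SN(1)]) auto
      also have "\<dots> = (\<Sum>i<kN. if i = 0 then (\<sigma>N 0)\<^sup>2 else 0)"
        using SN(2) k0 unfolding orthonorm_def kN_def by (intro sum.cong refl) auto
      also have "\<dots> = (\<sigma>N 0)\<^sup>2" using k0 by simp
      finally have e: "(norm (Nk *v vN 0))\<^sup>2 = (\<sigma>N 0)\<^sup>2" .
      have nv: "norm (vN 0) = 1" using SN(2) False unfolding orthonorm_def
        by (simp add: norm_eq_sqrt_inner)
      have "\<sigma>N 0 \<le> norm (Nk *v vN 0)" by (rule sq_le_norm) (use e in auto)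
      also have "\<dots> \<le> spec_norm Nk * norm (vN 0)" by (rule spec_ge)
      finally show ?thesis using nv by simp
    qed
    ultimately show ?thesis by linarith
  qed
  define s where "s = (if k < rH then \<sigma>H k else 0)"
  have s0: "0 \<le> s" unfolding s_def using SH(4) by (auto simp: less_imp_le)
  have HH: "(A + N) - Ahatk = (\<Sum>i\<in>{kH..<rH}. \<sigma>H i *\<^sub>R outer_prod (uH i) (vH i))"
  proof -
    have "{..<rH} = {..<kH} \<union> {kH..<rH}" unfolding kH_def by auto
    moreover have d: "{..<kH} \<inter> {kH..<rH} = {}" by auto
    ultimately have "(\<Sum>i<rH. \<sigma>H i *\<^sub>R outer_prod (uH i) (vH i)) =
       (\<Sum>i<kH. \<sigma>H i *\<^sub>R outer_prod (uH i) (vH i)) + (\<Sum>i\<in>{kH..<rH}. \<sigma>H i *\<^sub>R outer_prod (uH i) (vH i))"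
      using sum.union_disjoint[OF finite_lessThan finite_atLeastLessThan d, of "\<lambda>i. \<sigma>H i *\<^sub>R outer_prod (uH i) (vH i)"]
      by simp
    then show ?thesis using SH(6) Hk kH_def by simp
  qed
  have specHH: "spec_norm ((A + N) - Ahatk) \<le> s" unfolding HH
  proof (rule spec_bound[OF SH(1) SH(2) _ s0])
    show "{kH..<rH} \<subseteq> {..<rH}" by auto
    show "\<forall>i\<in>{kH..<rH}. \<bar>\<sigma>H i\<bar> \<le> s"
    proof
      fix i assume i: "i \<in> {kH..<rH}"
      then have "k < rH" "k \<le> i" "i < rH" unfolding kH_def by auto
      then have "0 < \<sigma>H i" "\<sigma>H i \<le> \<sigma>H k" using SH(4) SH(5) by auto
      then show "\<bar>\<sigma>H i\<bar> \<le> s" unfolding s_def using \<open>k < rH\<close> by simp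
    qed
  qed
  have sle: "s \<le> spec_norm (A - Ak) + spec_norm N"
  proof (cases "k < rH")
    case False
    then show ?thesis unfolding s_def using spec_nonneg[of "A - Ak"] spec_nonneg[of N] by simp
  next
    case True
    have onvA: "orthonorm vA kA" using on_mono[OF SA(2)] kA_def by simp
    obtain z where z1: "norm z = 1" and zs: "z \<in> span (vH ` {..k})" and zo: "\<forall>j<kA. vA j \<bullet> z = 0"
      using dimlem[OF SH(2) True onvA] kA_def by auto
    have Akz: "Ak *v z = 0" unfolding Ak mv_sum using zo kA_def by simp
    have "(norm ((A + N) *v z))\<^sup>2 = (\<Sum>i<rH. (\<sigma>H i * (vH i \<bullet> z))\<^sup>2)"
      unfolding SH(6)[symmetric] unfolding mv_sum
      by (subst SH(6)) (simp only: mv_sum on_norm_sum[OF SH(1) subset_refl])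
    also have "\<dots> \<ge> (\<Sum>i\<in>{..k}. (\<sigma>H i * (vH i \<bullet> z))\<^sup>2)"
      by (rule sum_mono2) (use True in auto)
    moreover have "(\<Sum>i\<in>{..k}. (\<sigma>H i * (vH i \<bullet> z))\<^sup>2) \<ge> (\<Sum>i\<in>{..k}. (\<sigma>H k)\<^sup>2 * (vH i \<bullet> z)\<^sup>2)"
    proof (rule sum_mono)
      fix i assume "i \<in> {..k}"
      then have "0 < \<sigma>H k" "\<sigma>H k \<le> \<sigma>H i" using SH(4) SH(5) True by auto
      then have "(\<sigma>H k)\<^sup>2 \<le> (\<sigma>H i)\<^sup>2" by (intro power_mono) auto
      then have "(\<sigma>H k)\<^sup>2 * (vH i \<bullet> z)\<^sup>2 \<le> (\<sigma>H i)\<^sup>2 * (vH i \<bullet> z)\<^sup>2"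
        by (rule mult_right_mono) simp
      then show "(\<sigma>H k)\<^sup>2 * (vH i \<bullet> z)\<^sup>2 \<le> (\<sigma>H i * (vH i \<bullet> z))\<^sup>2"
        by (simp only: power_mult_distrib)
    qed
    moreover have "(\<Sum>i\<in>{..k}. (\<sigma>H k)\<^sup>2 * (vH i \<bullet> z)\<^sup>2) = (\<sigma>H k)\<^sup>2"
    proof -
      have "(norm z)\<^sup>2 = (\<Sum>i\<in>{..k}. (vH i \<bullet> z)\<^sup>2)"
        by (rule span_expand[OF SH(2) _ zs]) (use True in auto)
      then show ?thesis using z1 by (simp add: sum_distrib_left[symmetric])
    qed
    ultimately have sq: "(\<sigma>H k)\<^sup>2 \<le> (norm ((A + N) *v z))\<^sup>2" by linarith
    have "\<sigma>H k \<le> norm ((A + N) *v z)" by (rule sq_le_norm[OF sq]) simp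
    also have "(A + N) *v z = ((A - Ak) + N) *v z"
      using Akz by (simp add: matrix_vector_mult_add_rdistrib matrix_vector_mult_diff_rdistrib)
    also have "norm (((A - Ak) + N) *v z) \<le> spec_norm ((A - Ak) + N) * norm z" by (rule spec_ge)
    also have "\<dots> \<le> spec_norm (A - Ak) + spec_norm N" using z1 spec_add by simp
    finally show ?thesis unfolding s_def using True by simp
  qed
  have "A - Ahatk = ((A + N) - Ahatk) - N" by simp
  then have "spec_norm (A - Ahatk) \<le> spec_norm ((A + N) - Ahatk) + spec_norm N"
    using spec_diff by metis
  then have spec: "spec_norm (A - Ahatk) \<le> spec_norm (A - Ak) + 2 * spec_norm Nk"
    using specHH sle specN by linarith
  show ?thesis using spec frob by blast
qed

end
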